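(* Let $\Gamma$ be a locally-finite simple geodetic graph. If $\rho$ is an embedded circuit in $\Gamma$ of diameter exceeding two which has minimal length among all embedded circuits in $\Gamma$ of diameter exceeding two, then $\rho$ contains a subpath of length three (four consecutive vertices of $\rho$) that is a geodesic in $\Gamma$.
   Context: A graph is geodetic if between any two vertices there is a unique shortest path (geodesic); $d$ is the path metric. A path $u_0,\dots,u_n$ is an embedded circuit of length $n$ if $u_0,\dots,u_{n-1}$ are distinct and $u_0=u_n$. The diameter of an embedded circuit is the maximum distance in $\Gamma$ between two of its vertices. *)

theory Defs
  imports Main
begin

text \<open>Paths/walks are nonempty vertex lists with consecutive vertices adjacent;
the length of a walk xs is length xs - 1.\<close>

definition simple_graph :: "('a \<Rightarrow> 'a \<Rightarrow> bool) \<Rightarrow> bool" where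
  "simple_graph E \<longleftrightarrow> (\<forall>u v. E u v \<longrightarrow> E v u) \<and> (\<forall>u. \<not> E u u)"

definition locally_finite :: "('a \<Rightarrow> 'a \<Rightarrow> bool) \<Rightarrow> bool" where
  "locally_finite E \<longleftrightarrow> (\<forall>v. finite {w. E v w})"

definition walk :: "('a \<Rightarrow> 'a \<Rightarrow> bool) \<Rightarrow> 'a list \<Rightarrow> bool" where
  "walk E xs \<longleftrightarrow> xs \<noteq> [] \<and> (\<forall>i. Suc i < length xs \<longrightarrow> E (xs ! i) (xs ! Suc i))"

definition walk_from_to :: "('a \<Rightarrow> 'a \<Rightarrow> bool) \<Rightarrow> 'a \<Rightarrow> 'a \<Rightarrow> 'a list \<Rightarrow> bool" where
  "walk_from_to E u v xs \<longleftrightarrow> walk E xs \<and> hd xs = u \<and> last xs = v"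

text \<open>Path metric (only meaningful for connected graphs; geodetic graphs are connected).\<close>
definition gdist :: "('a \<Rightarrow> 'a \<Rightarrow> bool) \<Rightarrow> 'a \<Rightarrow> 'a \<Rightarrow> nat" where
  "gdist E u v = (LEAST n. \<exists>xs. walk_from_to E u v xs \<and> length xs = Suc n)"

definition geodesic :: "('a \<Rightarrow> 'a \<Rightarrow> bool) \<Rightarrow> 'a list \<Rightarrow> bool" where
  "geodesic E xs \<longleftrightarrow> walk E xs \<and> length xs = Suc (gdist E (hd xs) (last xs))"

definition geodetic :: "('a \<Rightarrow> 'a \<Rightarrow> bool) \<Rightarrow> bool" where
  "geodetic E \<longleftrightarrow> (\<forall>u v. \<exists>!xs. walk_from_to E u v xs \<and>
      (\<forall>ys. walk_from_to E u v ys \<longrightarrow> length xs \<le> length ys))"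

definition embedded_circuit :: "('a \<Rightarrow> 'a \<Rightarrow> bool) \<Rightarrow> 'a list \<Rightarrow> bool" where
  "embedded_circuit E xs \<longleftrightarrow> walk E xs \<and> distinct (butlast xs) \<and> hd xs = last xs"

definition circuit_length :: "'a list \<Rightarrow> nat" where
  "circuit_length xs = length xs - 1"

definition circuit_diameter :: "('a \<Rightarrow> 'a \<Rightarrow> bool) \<Rightarrow> 'a list \<Rightarrow> nat" where
  "circuit_diameter E xs = Max {gdist E u v | u v. u \<in> set xs \<and> v \<in> set xs}"

end

theory Submission
  imports Defs
begin


lemma walk_Cons2: "walk E (x # y # xs) \<longleftrightarrow> E x y \<and> walk E (y # xs)"
  unfolding walk_def
  by (auto simp: nth_Cons split: nat.splits)

lemma walk_single[simp]: "walk E [x]"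
  by (simp add: walk_def)

lemma walk_rev:
  assumes "simple_graph E" "walk E xs" shows "walk E (rev xs)"
  unfolding walk_def
proof (intro conjI allI impI)
  show "rev xs \<noteq> []" using assms(2) by (simp add: walk_def)
next
  fix i assume i: "Suc i < length (rev xs)"
  let ?j = "length xs - Suc (Suc i)"
  have "Suc ?j < length xs" using i by simp
  then have "E (xs ! ?j) (xs ! Suc ?j)" using assms(2) unfolding walk_def by blast
  moreover have "rev xs ! i = xs ! Suc ?j" "rev xs ! Suc i = xs ! ?j"
    using i by (auto simp: rev_nth Suc_diff_Suc)
  ultimately show "E (rev xs ! i) (rev xs ! Suc i)"
    using assms(1) unfolding simple_graph_def by metis
qed

lemma gdist_le:
  assumes "walk_from_to E u v xs" shows "gdist E u v \<le> length xs - 1"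
proof -
  have "xs \<noteq> []" using assms by (simp add: walk_from_to_def walk_def)
  then have "length xs = Suc (length xs - 1)" by simp
  then show ?thesis unfolding gdist_def using assms by (metis (mono_tags, lifting) Least_le)
qed

lemma gdist_ex:
  assumes "geodetic E" shows "\<exists>xs. walk_from_to E u v xs \<and> length xs = Suc (gdist E u v)"
proof -
  obtain xs where xs: "walk_from_to E u v xs" using assms unfolding geodetic_def by blast
  then have "xs \<noteq> []" by (simp add: walk_from_to_def walk_def)
  then have "\<exists>n xs. walk_from_to E u v xs \<and> length xs = Suc n" using xs
    by (metis Suc_pred length_greater_0_conv)
  then show ?thesis unfolding gdist_def by (rule LeastI_ex)
qed

lemma gdist_min:
  assumes "geodetic E" "walk_from_to E u v ys" shows "Suc (gdist E u v) \<le> length ys"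
  using gdist_le[OF assms(2)] assms(2)
  by (cases ys) (auto simp: walk_from_to_def walk_def)

lemma gdist_sym:
  assumes "simple_graph E" "geodetic E" shows "gdist E u v = gdist E v u"
proof -
  have *: "gdist E y x \<le> gdist E x y" for x y
  proof -
    obtain xs where xs: "walk_from_to E x y xs" "length xs = Suc (gdist E x y)"
      using gdist_ex[OF assms(2)] by blast
    have "walk_from_to E y x (rev xs)" using xs walk_rev[OF assms(1)]
      by (auto simp: walk_from_to_def hd_rev last_rev)
    from gdist_le[OF this] show ?thesis using xs by simp
  qed
  show ?thesis using *[of u v] *[of v u] by simp
qed

lemma gdist_refl[simp]: "gdist E u u = 0"
  using gdist_le[of E u u "[u]"] by (simp add: walk_from_to_def)

lemma gdist_zero:
  assumes "geodetic E" "gdist E u v = 0" shows "u = v"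
proof -
  obtain xs where xs: "walk_from_to E u v xs" "length xs = Suc 0"
    using gdist_ex[OF assms(1)] assms(2) by metis
  then show ?thesis by (cases xs) (auto simp: walk_from_to_def)
qed

lemma gdist_edge: "E u v \<Longrightarrow> gdist E u v \<le> 1"
  using gdist_le[of E u v "[u,v]"] by (simp add: walk_from_to_def walk_Cons2)

lemma gdist_two: "E u w \<Longrightarrow> E w v \<Longrightarrow> gdist E u v \<le> 2"
  using gdist_le[of E u v "[u,w,v]"] by (simp add: walk_from_to_def walk_Cons2)

lemma walk2: "walk_from_to E x y w \<Longrightarrow> length w = 2 \<Longrightarrow> E x y"
  by (cases w rule: remdups_adj.cases) (auto simp: walk_from_to_def walk_Cons2)

lemma walk3: "walk_from_to E x y w \<Longrightarrow> length w = 3 \<Longrightarrow> \<exists>m. E x m \<and> E m y"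
  by (cases w rule: remdups_adj.cases; cases "tl (tl w)") (auto simp: walk_from_to_def walk_Cons2)



definition short_ok :: "('a \<Rightarrow> 'a \<Rightarrow> bool) \<Rightarrow> nat \<Rightarrow> bool" where
  "short_ok E n \<longleftrightarrow> (\<forall>\<sigma> x y. embedded_circuit E \<sigma> \<longrightarrow> x \<in> set \<sigma> \<longrightarrow> y \<in> set \<sigma> \<longrightarrow>
      3 \<le> gdist E x y \<longrightarrow> n \<le> length \<sigma> - 1)"

locale cyc =
  fixes E :: "'a \<Rightarrow> 'a \<Rightarrow> bool" and f :: "int \<Rightarrow> 'a" and n :: nat
  assumes sg: "simple_graph E"
    and finj: "\<And>i j. f i = f j \<longleftrightarrow> i mod int n = j mod int n"
    and fE: "\<And>k. E (f k) (f (k + 1))"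
    and npos: "n > 0"
begin

lemma Esym: "E x y \<Longrightarrow> E y x" using sg unfolding simple_graph_def by blast
lemma Eirr: "\<not> E x x" using sg unfolding simple_graph_def by blast

lemma f_add_n: "f (i + int n) = f i" using finj by simp

lemma arc_distinct: "l < n \<Longrightarrow> distinct (map (\<lambda>k. f (s + int k)) [0..<Suc l])"
proof -
  assume l: "l < n"
  have "inj_on (\<lambda>k. f (s + int k)) {0..<Suc l}"
  proof (rule inj_onI)
    fix x y assume x: "x \<in> {0..<Suc l}" and y: "y \<in> {0..<Suc l}" and e: "f (s + int x) = f (s + int y)"
    then have "(s + int x) mod int n = (s + int y) mod int n" using finj by blast
    then have "int n dvd (int x - int y)" by (simp add: mod_eq_dvd_iff)
    moreover have "\<bar>int x - int y\<bar> < int n" using x y l by auto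
    ultimately have "int x - int y = 0"
      using dvd_imp_le_int[of "int x - int y" "int n"] by fastforce
    then show "x = y" by simp
  qed
  then show ?thesis by (simp add: distinct_map del: upt_Suc)
qed

lemma walk_arc: "walk E (map (\<lambda>k. f (s + int k)) [0..<Suc l])"
  unfolding walk_def
proof (intro conjI allI impI)
  fix i assume i: "Suc i < length (map (\<lambda>k. f (s + int k)) [0..<Suc l])"
  have "E (f (s + int i)) (f (s + (1 + int i)))" using fE[of "s + int i"] by (metis add.assoc add.commute)
  then show "E (map (\<lambda>k. f (s + int k)) [0..<Suc l] ! i) (map (\<lambda>k. f (s + int k)) [0..<Suc l] ! Suc i)"
    using i fE[of "s + int i"] by (simp del: upt_Suc)
qed (simp del: upt_Suc)

lemma arc_edge:
  assumes "l < n" "E (f (s + int l)) (f s)"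
  shows "embedded_circuit E (map (\<lambda>k. f (s + int k)) [0..<Suc l] @ [f s])"
  unfolding embedded_circuit_def
proof (intro conjI)
  show "distinct (butlast (map (\<lambda>k. f (s + int k)) [0..<Suc l] @ [f s]))"
    using arc_distinct[OF assms(1)] by (simp only: butlast_snoc)
  show "hd (map (\<lambda>k. f (s + int k)) [0..<Suc l] @ [f s]) = last (map (\<lambda>k. f (s + int k)) [0..<Suc l] @ [f s])"
    by (simp add: upt_conv_Cons del: upt_Suc)
  show "walk E (map (\<lambda>k. f (s + int k)) [0..<Suc l] @ [f s])"
    unfolding walk_def
  proof (intro conjI allI impI)
    fix i assume i: "Suc i < length (map (\<lambda>k. f (s + int k)) [0..<Suc l] @ [f s])"
    show "E ((map (\<lambda>k. f (s + int k)) [0..<Suc l] @ [f s]) ! i) ((map (\<lambda>k. f (s + int k)) [0..<Suc l] @ [f s]) ! Suc i)"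
    proof (cases "i < l")
      case True
      have "E (f (s + int i)) (f (s + (1 + int i)))" using fE[of "s + int i"] by (metis add.assoc add.commute)
      then show ?thesis using True fE[of "s + int i"] by (simp add: nth_append del: upt_Suc)
    next
      case False
      then have "i = l" using i by simp
      then show ?thesis using assms(2) by (simp add: nth_append del: upt_Suc)
    qed
  qed simp
qed

lemma arc_mid:
  assumes "l < n" "E (f (s + int l)) m" "E m (f s)" "m \<notin> range f"
  shows "embedded_circuit E (map (\<lambda>k. f (s + int k)) [0..<Suc l] @ [m, f s])"
  unfolding embedded_circuit_def
proof (intro conjI)
  have "butlast (map (\<lambda>k. f (s + int k)) [0..<Suc l] @ [m, f s]) = map (\<lambda>k. f (s + int k)) [0..<Suc l] @ [m]"
    by (simp add: butlast_append)
  then show "distinct (butlast (map (\<lambda>k. f (s + int k)) [0..<Suc l] @ [m, f s]))"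
    using arc_distinct[OF assms(1)] assms(4) by auto
  show "hd (map (\<lambda>k. f (s + int k)) [0..<Suc l] @ [m, f s]) = last (map (\<lambda>k. f (s + int k)) [0..<Suc l] @ [m, f s])"
    by (simp add: upt_conv_Cons del: upt_Suc)
  show "walk E (map (\<lambda>k. f (s + int k)) [0..<Suc l] @ [m, f s])"
    unfolding walk_def
  proof (intro conjI allI impI)
    fix i assume i: "Suc i < length (map (\<lambda>k. f (s + int k)) [0..<Suc l] @ [m, f s])"
    show "E ((map (\<lambda>k. f (s + int k)) [0..<Suc l] @ [m, f s]) ! i) ((map (\<lambda>k. f (s + int k)) [0..<Suc l] @ [m, f s]) ! Suc i)"
    proof (cases "i < l")
      case True
      have "E (f (s + int i)) (f (s + (1 + int i)))" using fE[of "s + int i"] by (metis add.assoc add.commute)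
      then show ?thesis using True fE[of "s + int i"] by (simp add: nth_append del: upt_Suc)
    next
      case False
      then have "i = l \<or> i = Suc l" using i by auto
      then show ?thesis using assms(2,3) by (auto simp: nth_append del: upt_Suc)
    qed
  qed simp
qed

lemma arc_edge_bound:
  assumes "short_ok E n" "l < n" "E (f (s + int l)) (f s)" "k1 \<le> l" "k2 \<le> l"
    "3 \<le> gdist E (f (s + int k1)) (f (s + int k2))"
  shows "n \<le> Suc l"
proof -
  have "f (s + int k1) \<in> set (map (\<lambda>k. f (s + int k)) [0..<Suc l] @ [f s])"
       "f (s + int k2) \<in> set (map (\<lambda>k. f (s + int k)) [0..<Suc l] @ [f s])"
    using assms(4,5) by (auto simp del: upt_Suc)
  from assms(1)[unfolded short_ok_def, rule_format, OF arc_edge[OF assms(2,3)] this assms(6)]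
  show ?thesis by simp
qed

lemma arc_mid_bound:
  assumes "short_ok E n" "l < n" "E (f (s + int l)) m" "E m (f s)" "m \<notin> range f" "k1 \<le> l" "k2 \<le> l"
    "3 \<le> gdist E (f (s + int k1)) (f (s + int k2))"
  shows "n \<le> Suc (Suc l)"
proof -
  have "f (s + int k1) \<in> set (map (\<lambda>k. f (s + int k)) [0..<Suc l] @ [m, f s])"
       "f (s + int k2) \<in> set (map (\<lambda>k. f (s + int k)) [0..<Suc l] @ [m, f s])"
    using assms(6,7) by (auto simp del: upt_Suc)
  from assms(1)[unfolded short_ok_def, rule_format, OF arc_mid[OF assms(2-5)] this assms(8)]
  show ?thesis by simp
qed

end


context cyc begin

lemma f_eq_shift: "i = j + int n \<Longrightarrow> f i = f j" using f_add_n by simp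

lemma f_modeq: "i mod int n = j mod int n \<Longrightarrow> f i = f j" using finj by blast

lemma core:
  assumes geo: "geodetic E" and sh: "short_ok E n"
    and W: "\<And>i. gdist E (f i) (f (i + 3)) \<le> 2"
    and D: "3 \<le> gdist E (f a) (f b)"
  shows "gdist E (f (a - 1)) (f b) \<le> 2"
proof -
  define c where "c = nat ((b - a) mod int n)"
  have c_lt: "c < n" using npos unfolding c_def by (simp add: nat_less_iff)
  have "f b = f (a + int c)"
    unfolding c_def using npos by (intro f_modeq) (simp add: mod_add_right_eq)
  then have D': "3 \<le> gdist E (f a) (f (a + int c))" using D by simp
  have "c \<noteq> 0"
  proof
    assume "c = 0" then show False using D' by simp
  qed
  moreover have "c \<noteq> 1" using D' gdist_edge[of E "f a" "f (a+1)", OF fE[of a]] by auto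
  moreover have "c \<noteq> 2"
  proof
    assume "c = 2"
    have "a + 1 + 1 = a + 2" by simp
    then have "E (f (a + 1)) (f (a + 2))" using fE[of "a + 1"] by metis
    then have "gdist E (f a) (f (a + 2)) \<le> 2" using gdist_two fE[of a] by metis
    then show False using D' \<open>c = 2\<close> by simp
  qed
  moreover have "c \<noteq> 3" using D' W[of a] by auto
  moreover have "c \<noteq> n - 1"
  proof
    assume "c = n - 1"
    then have "a + int c = (a - 1) + int n" using npos by simp
    then have "f (a + int c) = f (a - 1)" by (metis f_add_n)
    moreover have "E (f (a - 1)) (f a)" using fE[of "a - 1"] by simp
    ultimately have "gdist E (f a) (f (a + int c)) \<le> 1" using gdist_edge Esym by metis
    then show False using D' by simp
  qed
  ultimately have c4: "4 \<le> c" and cn: "c \<le> n - 2" using c_lt by auto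
  then have n6: "6 \<le> n" by simp
  define u where "u = f a"
  define v where "v = f (a + int c)"
  have fan: "f (a + int n) = u" unfolding u_def by (rule f_add_n)
  have Dv: "3 \<le> gdist E u v" using D' unfolding u_def v_def .
  have kv: "\<And>s k. k \<le> c \<Longrightarrow> s + int k = a + int c \<Longrightarrow> f (s + int k) = v" unfolding v_def by simp
  define d where "d = gdist E u (f (a + 3))"
  have d2: "d \<le> 2" unfolding d_def u_def by (rule W)
  have d0: "d \<noteq> 0"
  proof
    assume "d = 0"
    then have "f a = f (a + 3)" using gdist_zero[OF geo] unfolding d_def u_def by blast
    then have "a mod int n = (a + 3) mod int n" using finj by blast
    then have "int n dvd 3" by (simp add: mod_eq_dvd_iff)
    then have "int n \<le> 3" by (rule zdvd_imp_le) simp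
    then show False using n6 by simp
  qed
  obtain w where w: "walk_from_to E u (f (a + 3)) w" "length w = Suc d"
    using gdist_ex[OF geo] unfolding d_def by blast
  show ?thesis
  proof (cases "d = 1")
    case True
    then have "length w = 2" using w(2) by simp
    then have e: "E u (f (a + 3))" using walk2[OF w(1)] by blast
    have "n \<le> Suc (n - 3)"
    proof (rule arc_edge_bound[OF sh, of "n - 3" "a + 3" "n - 3" "c - 3"])
      have "a + 3 + int (n - 3) = a + int n" using n6 by simp
      then show "E (f (a + 3 + int (n - 3))) (f (a + 3))" using e fan by simp
      have "a + 3 + int (n - 3) = a + int n" using n6 by simp
      moreover have "a + 3 + int (c - 3) = a + int c" using c4 by simp
      ultimately show "3 \<le> gdist E (f (a + 3 + int (n - 3))) (f (a + 3 + int (c - 3)))"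
        using fan Dv v_def by simp
    qed (use n6 cn in auto)
    then show ?thesis using n6 by simp
  next
    case False
    then have "d = 2" using d0 d2 by simp
    then have "length w = 3" using w(2) by simp
    then obtain m where m1: "E u m" and m2: "E m (f (a + 3))" using walk3[OF w(1)] by blast
    have ea3: "a + 3 + int (n - 3) = a + int n" using n6 by simp
    have eac: "a + 3 + int (c - 3) = a + int c" using c4 by simp
    show ?thesis
    proof (cases "m \<in> range f")
      case False
      have "n \<le> Suc (Suc (n - 3))"
      proof (rule arc_mid_bound[OF sh, of "n - 3" "a + 3" m "n - 3" "c - 3"])
        show "E (f (a + 3 + int (n - 3))) m" using m1 fan ea3 by simp
        show "3 \<le> gdist E (f (a + 3 + int (n - 3))) (f (a + 3 + int (c - 3)))"
          using fan Dv v_def ea3 eac by simp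
      qed (use n6 cn m2 False in auto)
      then show ?thesis using n6 by simp
    next
      case True
      then obtain t0 where "m = f t0" by auto
      define t where "t = nat ((t0 - a) mod int n)"
      have t_lt: "t < n" using npos unfolding t_def by (simp add: nat_less_iff)
      have mt: "m = f (a + int t)"
        unfolding t_def \<open>m = f t0\<close> using npos by (intro f_modeq) (simp add: mod_add_right_eq)
      have "t \<noteq> 0"
      proof
        assume "t = 0" then show False using m1 Eirr mt u_def by simp
      qed
      moreover have "t \<noteq> 3"
      proof
        assume "t = 3" then show False using m2 Eirr mt by simp
      qed
      moreover have "t \<noteq> 1"
      proof
        assume t1: "t = 1"
        have "n \<le> Suc (n - 2)"
        proof (rule arc_edge_bound[OF sh, of "n - 2" "a + 3" "n - 3" "c - 3"])
          have "f (a + 3 + int (n - 2)) = f (a + int t)" by (rule f_eq_shift) (use n6 t1 in simp)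
          then have "f (a + 3 + int (n - 2)) = m" using mt by simp
          then show "E (f (a + 3 + int (n - 2))) (f (a + 3))" using m2 by simp
          show "3 \<le> gdist E (f (a + 3 + int (n - 3))) (f (a + 3 + int (c - 3)))"
            using fan Dv v_def ea3 eac by simp
        qed (use n6 cn in auto)
        then show False using n6 by simp
      qed
      moreover have "t \<noteq> 2"
      proof
        assume t2: "t = 2"
        have e1: "a + 2 + int (n - 2) = a + int n" using n6 by simp
        have e2: "a + 2 + int (c - 2) = a + int c" using c4 by simp
        have "n \<le> Suc (n - 2)"
        proof (rule arc_edge_bound[OF sh, of "n - 2" "a + 2" "n - 2" "c - 2"])
          show "E (f (a + 2 + int (n - 2))) (f (a + 2))" using m1 mt t2 e1 fan by simp
          show "3 \<le> gdist E (f (a + 2 + int (n - 2))) (f (a + 2 + int (c - 2)))"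
            using fan Dv v_def e1 e2 by simp
        qed (use n6 cn in auto)
        then show False using n6 by simp
      qed
      moreover have "\<not> (4 \<le> t \<and> t \<le> n - 2)"
      proof
        assume tt: "4 \<le> t \<and> t \<le> n - 2"
        show False
        proof (cases "t \<le> c")
          case True
          have e1: "a + int t + int (n - t) = a + int n" using t_lt by simp
          have e2: "a + int t + int (c - t) = a + int c" using True by simp
          have "n \<le> Suc (n - t)"
          proof (rule arc_edge_bound[OF sh, of "n - t" "a + int t" "n - t" "c - t"])
            show "E (f (a + int t + int (n - t))) (f (a + int t))" using m1 mt e1 fan by simp
            show "3 \<le> gdist E (f (a + int t + int (n - t))) (f (a + int t + int (c - t)))"
              using fan Dv v_def e1 e2 by simp
          qed (use n6 cn tt True t_lt in auto)
          then show False using tt by linarith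
        next
          case False
          have "n \<le> Suc t"
          proof (rule arc_edge_bound[OF sh, of t a 0 c])
            show "E (f (a + int t)) (f a)" using m1 mt Esym u_def by simp
            show "3 \<le> gdist E (f (a + int 0)) (f (a + int c))"
              using D' by simp
          qed (use n6 cn tt False t_lt in auto)
          then show False using tt by linarith
        qed
      qed
      ultimately have "t = n - 1" using t_lt by linarith
      show ?thesis
      proof (rule ccontr)
        assume neg: "\<not> gdist E (f (a - 1)) (f b) \<le> 2"
        have e1: "f (a + 3 + int (n - 4)) = f (a - 1)" by (rule f_eq_shift) (use n6 in simp)
        have "a + int t = (a - 1) + int n" using npos \<open>t = n - 1\<close> by simp
        then have ma: "m = f (a - 1)" using mt by (metis f_add_n)
        have "n \<le> Suc (n - 4)"
        proof (rule arc_edge_bound[OF sh, of "n - 4" "a + 3" "n - 4" "c - 3"])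
          show "E (f (a + 3 + int (n - 4))) (f (a + 3))" using m2 ma e1 by simp
          show "3 \<le> gdist E (f (a + 3 + int (n - 4))) (f (a + 3 + int (c - 3)))"
            using neg e1 eac \<open>f b = f (a + int c)\<close> by simp
        qed (use n6 cn in auto)
        then show False using n6 by simp
      qed
    qed
  qed
qed

end


lemma (in cyc) n_ge3:
  assumes "3 \<le> gdist E (f a) (f b)" shows "3 \<le> n"
proof (rule ccontr)
  assume "\<not> 3 \<le> n"
  define c where "c = nat ((b - a) mod int n)"
  have c_lt: "c < n" using npos unfolding c_def by (simp add: nat_less_iff)
  have "f b = f (a + int c)"
    unfolding c_def using npos by (intro f_modeq) (simp add: mod_add_right_eq)
  then have D': "3 \<le> gdist E (f a) (f (a + int c))" using assms by simp
  have "c = 0 \<or> c = 1" using c_lt \<open>\<not> 3 \<le> n\<close> by linarith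
  then show False
  proof
    assume "c = 0" then show False using D' by simp
  next
    assume "c = 1" then show False using D' gdist_edge[of E "f a" "f (a+1)", OF fE[of a]] by simp
  qed
qed

lemma ex1_eq: "\<exists>!x. P x \<Longrightarrow> P a \<Longrightarrow> P b \<Longrightarrow> a = b" by blast

theorem lemma6:
  fixes E :: "'a \<Rightarrow> 'a \<Rightarrow> bool" and \<rho> :: "'a list"
  assumes "simple_graph E" and "locally_finite E" and "geodetic E"
    and "embedded_circuit E \<rho>" and "circuit_diameter E \<rho> > 2"
    and "\<And>\<sigma>. embedded_circuit E \<sigma> \<Longrightarrow> circuit_diameter E \<sigma> > 2 \<Longrightarrow>
            circuit_length \<rho> \<le> circuit_length \<sigma>"
  shows "\<exists>i < circuit_length \<rho>.
           geodesic E (map (\<lambda>k. \<rho> ! ((i + k) mod circuit_length \<rho>)) [0..<4])"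
proof (rule ccontr)
  assume negc: "\<not> ?thesis"
  note sg = assms(1) and geo = assms(3)
  define n where "n = circuit_length \<rho>"
  have rne: "\<rho> \<noteq> []" using assms(4) by (simp add: embedded_circuit_def walk_def)
  have len: "length \<rho> = Suc n" using rne by (simp add: n_def circuit_length_def)
  have fin: "\<And>\<sigma>. finite {gdist E u v | u v. u \<in> set \<sigma> \<and> v \<in> set \<sigma>}"
  proof -
    fix \<sigma> :: "'a list"
    have "{gdist E u v | u v. u \<in> set \<sigma> \<and> v \<in> set \<sigma>} = (\<lambda>(u,v). gdist E u v) ` (set \<sigma> \<times> set \<sigma>)"
      by auto
    then show "finite {gdist E u v | u v. u \<in> set \<sigma> \<and> v \<in> set \<sigma>}" by simp
  qed
  obtain x y where xy: "x \<in> set \<rho>" "y \<in> set \<rho>" "3 \<le> gdist E x y"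
  proof -
    have ne: "{gdist E u v | u v. u \<in> set \<rho> \<and> v \<in> set \<rho>} \<noteq> {}"
      using rne by (metis (mono_tags, lifting) empty_Collect_eq list.set_sel(1))
    have "circuit_diameter E \<rho> \<in> {gdist E u v | u v. u \<in> set \<rho> \<and> v \<in> set \<rho>}"
      unfolding circuit_diameter_def by (rule Max_in[OF fin ne])
    then show ?thesis using that assms(5) by force
  qed
  have short: "short_ok E n"
    unfolding short_ok_def
  proof (intro allI impI)
    fix \<sigma> u v assume s: "embedded_circuit E \<sigma>" "u \<in> set \<sigma>" "v \<in> set \<sigma>" "3 \<le> gdist E u v"
    have "gdist E u v \<le> circuit_diameter E \<sigma>"
      unfolding circuit_diameter_def using s(2,3) by (intro Max_ge[OF fin]) auto
    then have "circuit_length \<rho> \<le> circuit_length \<sigma>" using assms(6)[OF s(1)] s(4) by simp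
    then show "n \<le> length \<sigma> - 1" by (simp add: n_def circuit_length_def)
  qed
  have npos: "n > 0"
  proof (rule ccontr)
    assume "\<not> n > 0"
    then have "length \<rho> = 1" using len by simp
    then obtain z where "\<rho> = [z]" by (cases \<rho>) auto
    then show False using xy by simp
  qed
  define f where "f k = \<rho> ! nat (k mod int n)" for k
  have dist: "distinct (butlast \<rho>)" using assms(4) by (simp add: embedded_circuit_def)
  have hdl: "\<rho> ! n = \<rho> ! 0"
    using assms(4) rne len by (simp add: embedded_circuit_def hd_conv_nth last_conv_nth)
  have rwalk: "\<And>i. Suc i < length \<rho> \<Longrightarrow> E (\<rho> ! i) (\<rho> ! Suc i)"
    using assms(4) by (simp add: embedded_circuit_def walk_def)
  interpret cyc E f n
  proof
    show "simple_graph E" by (rule sg)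
    show "0 < n" by (rule npos)
    fix i j :: int
    show "f i = f j \<longleftrightarrow> i mod int n = j mod int n"
    proof
      assume e: "f i = f j"
      have p: "nat (i mod int n) < n" "nat (j mod int n) < n" using npos by (simp_all add: nat_less_iff)
      have bl: "length (butlast \<rho>) = n" using len by simp
      have "butlast \<rho> ! nat (i mod int n) = butlast \<rho> ! nat (j mod int n)"
        using e p len unfolding f_def by (simp add: nth_butlast)
      then have "nat (i mod int n) = nat (j mod int n)"
        using nth_eq_iff_index_eq[OF dist] p bl by simp
      moreover have "0 \<le> i mod int n" "0 \<le> j mod int n" using npos by simp_all
      ultimately show "i mod int n = j mod int n" by (metis nat_eq_iff2)
    qed (simp add: f_def)
  next
    fix k :: int
    define p where "p = nat (k mod int n)"
    have p: "p < n" using npos unfolding p_def by (simp add: nat_less_iff)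
    have pk: "int p = k mod int n" using npos unfolding p_def by simp
    have "(k + 1) mod int n = (int p + 1) mod int n" using pk by (simp add: mod_add_left_eq)
    show "E (f k) (f (k + 1))"
    proof (cases "Suc p < n")
      case True
      then have "(k + 1) mod int n = int (Suc p)" using \<open>(k + 1) mod int n = (int p + 1) mod int n\<close> by simp
      then have "f (k + 1) = \<rho> ! Suc p" unfolding f_def by (metis nat_int)
      moreover have "f k = \<rho> ! p" unfolding f_def p_def by simp
      ultimately show ?thesis using rwalk[of p] len True by simp
    next
      case False
      then have "Suc p = n" using p by simp
      then have "int p + 1 = int n" by simp
      then have "(k + 1) mod int n = 0" using \<open>(k + 1) mod int n = (int p + 1) mod int n\<close> by simp
      then have "f (k + 1) = \<rho> ! Suc p" unfolding f_def using \<open>Suc p = n\<close> hdl by simp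
      moreover have "f k = \<rho> ! p" unfolding f_def p_def by simp
      ultimately show ?thesis using rwalk[of p] len \<open>Suc p = n\<close> by simp
    qed
  qed
  have inrange: "\<And>z. z \<in> set \<rho> \<Longrightarrow> z \<in> range f"
  proof -
    fix z assume "z \<in> set \<rho>"
    then obtain i where i: "i < length \<rho>" "z = \<rho> ! i" by (auto simp: in_set_conv_nth)
    show "z \<in> range f"
    proof (cases "i < n")
      case True
      then have "f (int i) = z" unfolding f_def using i by simp
      then show ?thesis by (metis rangeI)
    next
      case False
      then have "i = n" using i len by simp
      then have "f 0 = z" unfolding f_def using i hdl by simp
      then show ?thesis by (metis rangeI)
    qed
  qed
  obtain a b where ab: "f a = x" "f b = y" using inrange xy by blast
  have D: "3 \<le> gdist E (f a) (f b)" using ab xy by simp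
  have W: "\<And>i. gdist E (f i) (f (i + 3)) \<le> 2"
  proof -
    fix i :: int
    define j where "j = nat (i mod int n)"
    have j: "j < n" using npos unfolding j_def by (simp add: nat_less_iff)
    have ng: "\<not> geodesic E (map (\<lambda>k. \<rho> ! ((j + k) mod n)) [0..<4])"
      using negc j unfolding n_def by blast
    have "\<And>k. \<rho> ! ((j + k) mod n) = f (i + int k)"
    proof -
      fix k
      have "int ((j + k) mod n) = (int j + int k) mod int n" by (simp add: of_nat_mod)
      also have "... = (i + int k) mod int n" unfolding j_def using npos by (simp add: mod_add_left_eq)
      finally show "\<rho> ! ((j + k) mod n) = f (i + int k)" unfolding f_def by (metis nat_int)
    qed
    then have "map (\<lambda>k. \<rho> ! ((j + k) mod n)) [0..<4] = map (\<lambda>k. f (i + int k)) [0..<Suc 3]"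
      by simp
    then have ng2: "\<not> geodesic E (map (\<lambda>k. f (i + int k)) [0..<Suc 3])" using ng by metis
    have wk: "walk E (map (\<lambda>k. f (i + int k)) [0..<Suc 3])" by (rule walk_arc)
    have hd: "hd (map (\<lambda>k. f (i + int k)) [0..<Suc 3]) = f i"
      and lt: "last (map (\<lambda>k. f (i + int k)) [0..<Suc 3]) = f (i + 3)" by (simp_all add: upt_rec)
    have "gdist E (f i) (f (i + 3)) \<le> 3"
      using gdist_le[of E "f i" "f (i+3)" "map (\<lambda>k. f (i + int k)) [0..<Suc 3]"] wk hd lt
      by (simp add: walk_from_to_def)
    moreover have "gdist E (f i) (f (i + 3)) \<noteq> 3"
      using ng2 wk hd lt unfolding geodesic_def by simp
    ultimately show "gdist E (f i) (f (i + 3)) \<le> 2" by simp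
  qed
  have n3: "3 \<le> n" by (rule n_ge3[OF D])
  have left: "gdist E (f (a - 1)) (f b) \<le> 2" by (rule core[OF geo short W D])
  interpret g: cyc E "\<lambda>k. f (- k)" n
  proof
    show "simple_graph E" by (rule sg)
    show "0 < n" by (rule npos)
    fix i j :: int
    have "(- i) mod int n = (- j) mod int n \<longleftrightarrow> i mod int n = j mod int n"
      by (simp add: mod_eq_dvd_iff) (metis dvd_minus_iff minus_diff_eq)
    then show "f (- i) = f (- j) \<longleftrightarrow> i mod int n = j mod int n" using finj by simp
  next
    fix k :: int
    have "E (f (- k - 1)) (f (- k - 1 + 1))" by (rule fE)
    then show "E (f (- k)) (f (- (k + 1)))" using Esym by simp
  qed
  have W': "\<And>i. gdist E (f (- i)) (f (- (i + 3))) \<le> 2"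
  proof -
    fix i :: int
    have "gdist E (f (- i - 3)) (f (- i - 3 + 3)) \<le> 2" by (rule W)
    then show "gdist E (f (- i)) (f (- (i + 3))) \<le> 2" using gdist_sym[OF sg geo] by (simp add: algebra_simps)
  qed
  have D2: "3 \<le> gdist E (f (- (- a))) (f (- (- b)))" using D by simp
  have right: "gdist E (f (a + 1)) (f b) \<le> 2"
    using g.core[OF geo short W' D2] by (simp add: algebra_simps)
  define u where "u = f a"
  define v where "v = f b"
  define p where "p = f (a - 1)"
  define q where "q = f (a + 1)"
  have Eup: "E u p" unfolding u_def p_def using fE[of "a - 1"] Esym by simp
  have Euq: "E u q" unfolding u_def q_def using fE[of a] by simp
  have cons: "\<And>w. E u w \<Longrightarrow> gdist E u v \<le> Suc (gdist E w v)"
  proof -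
    fix w assume "E u w"
    obtain P where P: "walk_from_to E w v P" "length P = Suc (gdist E w v)" using gdist_ex[OF geo] by blast
    then have "walk_from_to E u v (u # P)" using \<open>E u w\<close>
      by (cases P) (auto simp: walk_from_to_def walk_Cons2)
    from gdist_le[OF this] show "gdist E u v \<le> Suc (gdist E w v)" using P by simp
  qed
  have duv: "gdist E u v = 3" and dp: "gdist E p v = 2" and dq: "gdist E q v = 2"
    using cons[OF Eup] cons[OF Euq] left right D unfolding u_def v_def p_def q_def by auto
  obtain P where P: "walk_from_to E p v P" "length P = 3" using gdist_ex[OF geo, of p v] dp by auto
  obtain Q where Q: "walk_from_to E q v Q" "length Q = 3" using gdist_ex[OF geo, of q v] dq by auto
  have wP: "walk_from_to E u v (u # P)" using P Eup by (cases P) (auto simp: walk_from_to_def walk_Cons2)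
  have wQ: "walk_from_to E u v (u # Q)" using Q Euq by (cases Q) (auto simp: walk_from_to_def walk_Cons2)
  have minP: "\<forall>ys. walk_from_to E u v ys \<longrightarrow> length (u # P) \<le> length ys"
    using gdist_min[OF geo] duv P by fastforce
  have minQ: "\<forall>ys. walk_from_to E u v ys \<longrightarrow> length (u # Q) \<le> length ys"
    using gdist_min[OF geo] duv Q by fastforce
  have ex1: "\<exists>!xs. walk_from_to E u v xs \<and> (\<forall>ys. walk_from_to E u v ys \<longrightarrow> length xs \<le> length ys)"
    using geo unfolding geodetic_def by blast
  have "u # P = u # Q"
    by (rule ex1_eq[OF ex1]) (use wP wQ minP minQ in blast)+
  then have "hd P = hd Q" by simp
  then have "p = q" using P Q by (simp add: walk_from_to_def)
  then have "(a - 1) mod int n = (a + 1) mod int n" unfolding p_def q_def using finj by blast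
  then have "int n dvd 2" by (simp add: mod_eq_dvd_iff)
  then have "int n \<le> 2" by (rule zdvd_imp_le) simp
  then show False using n3 by simp
qed

end
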